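(* Let $k$ be a field of characteristic $0$, $m\ge 2$, and let $F_1,\dots,F_m\in k[X_1,\dots,X_m]$ be such that the determinant of the Jacobian matrix $\left(\partial F_i/\partial X_j\right)_{1\le i,j\le m}$ is a nonzero element of $k$. Then the system $$F_i(\mathcal{U}_1(t),\dots,\mathcal{U}_m(t))=tX_i+(1-t)F_i(X_1,\dots,X_m)\quad (1\le i\le m),$$ with initial conditions $\mathcal{U}_i(0)=X_i$ for $1\le i\le m$, has a unique solution $\mathcal{U}_1(t),\dots,\mathcal{U}_m(t)\in k[X_1,\dots,X_m][[t]]$, with $\mathcal{U}_i(t)=X_i+\sum_{j\ge1}u_{i,j}(X_1,\dots,X_m)t^j$ where $u_{i,j}\in k[X_1,\dots,X_m]$.
   Context: $k[X_1,\dots,X_m][[t]]$ denotes the ring of formal power series in $t$ with coefficients in $k[X_1,\dots,X_m]$; evaluation at $t=0$ means taking the constant term. *)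

theory Defs
  imports "HOL-Analysis.Analysis" "HOL-Library.Poly_Mapping"
    "HOL-Computational_Algebra.Formal_Power_Series"
begin

text \<open>Multivariate polynomials k[X_i : i in 'n] are represented as finitely supported
  maps from monomials (exponent vectors 'n =>0 nat) to coefficients; multiplication is
  the convolution product of HOL-Library.Poly_Mapping.\<close>

type_synonym ('n, 'a) mpoly = "('n \<Rightarrow>\<^sub>0 nat) \<Rightarrow>\<^sub>0 'a"

definition mp_const :: "'a::zero \<Rightarrow> ('n, 'a) mpoly" where
  "mp_const c = Poly_Mapping.single 0 c"

definition mp_var :: "'n \<Rightarrow> ('n, 'a::{zero,one}) mpoly" where
  "mp_var i = Poly_Mapping.single (Poly_Mapping.single i 1) 1"

definition mp_pderiv :: "'n \<Rightarrow> ('n, 'a::comm_semiring_1) mpoly \<Rightarrow> ('n, 'a) mpoly" where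
  "mp_pderiv j p = (\<Sum>\<mu>\<in>Poly_Mapping.keys p.
      Poly_Mapping.single (\<mu> - Poly_Mapping.single j 1)
        (of_nat (Poly_Mapping.lookup \<mu> j) * Poly_Mapping.lookup p \<mu>))"

definition mp_eval :: "('a \<Rightarrow> 'b::comm_semiring_1) \<Rightarrow> ('n::finite \<Rightarrow> 'b) \<Rightarrow> ('n, 'a::zero) mpoly \<Rightarrow> 'b" where
  "mp_eval \<phi> x p = (\<Sum>\<mu>\<in>Poly_Mapping.keys p. \<phi> (Poly_Mapping.lookup p \<mu>) * (\<Prod>i\<in>UNIV. x i ^ Poly_Mapping.lookup \<mu> i))"

definition mp_eval_fps :: "('n::finite \<Rightarrow> ('n, 'a::comm_ring_1) mpoly fps) \<Rightarrow> ('n, 'a) mpoly \<Rightarrow> ('n, 'a) mpoly fps" where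
  "mp_eval_fps U p = mp_eval (\<lambda>c. fps_const (mp_const c)) U p"

definition jacobian_det :: "('n::finite \<Rightarrow> ('n, 'a::comm_ring_1) mpoly) \<Rightarrow> ('n, 'a) mpoly" where
  "jacobian_det F = det (\<chi> i j. mp_pderiv j (F i))"

end

theory Submission
  imports Defs
begin


lemma mat_right_inv:
  fixes A :: "'a::comm_ring_1^'n::finite^'n"
  assumes "det A * e = 1"
  shows "\<exists>C. A ** C = mat 1"
proof -
  define C :: "'a^'n^'n" where "C = (\<chi> j k. e * det (\<chi> i. if i = k then axis j 1 else row i A))"
  have "(A ** C) $ p $ k = mat 1 $ p $ k" for p k
  proof -
    have "(A ** C) $ p $ k = e * (\<Sum>j\<in>UNIV. A$p$j * det (\<chi> i. if i = k then axis j 1 else row i A))"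
      by (simp add: C_def matrix_matrix_mult_def sum_distrib_left mult.left_commute)
    also have "(\<Sum>j\<in>UNIV. A$p$j * det (\<chi> i. if i = k then axis j 1 else row i A))
        = det (\<chi> i. if i = k then (\<Sum>j\<in>UNIV. A$p$j *s axis j 1) else row i A)"
      by (simp add: det_linear_row_sum det_row_mul)
    also have "(\<Sum>j\<in>UNIV. A$p$j *s axis j 1) = row p A"
      by (simp add: vec_eq_iff axis_def row_def if_distrib cong: if_cong)
    finally have eq: "(A ** C) $ p $ k = e * det (\<chi> i. if i = k then row p A else row i A)" .
    show ?thesis
    proof (cases "p = k")
      case True
      have "(\<chi> i. if i = k then row p A else row i A) = A"
        using True by (simp add: vec_eq_iff row_def)
      then show ?thesis using eq True assms by (simp add: mat_def mult.commute)
    next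
      case False
      have "det (\<chi> i. if i = k then row p A else row i A) = 0"
        by (rule det_identical_rows[OF False]) (use False in \<open>simp add: row_def\<close>)
      then show ?thesis using eq False by (simp add: mat_def)
    qed
  qed
  then show ?thesis by (intro exI[of _ C]) (simp add: vec_eq_iff)
qed

lemma mat_inv:
  fixes A :: "'a::comm_ring_1^'n::finite^'n"
  assumes "det A * e = 1"
  shows "\<exists>C. A ** C = mat 1 \<and> C ** A = mat 1"
proof -
  obtain C where C: "A ** C = mat 1" using mat_right_inv[OF assms] by blast
  have "det C * det A = 1" using C det_mul[of A C] by (simp add: mult.commute)
  then obtain D where D: "C ** D = mat 1" using mat_right_inv by blast
  have "A = D" by (metis C D matrix_mul_assoc matrix_mul_lid matrix_mul_rid)
  with C D show ?thesis by blast
qed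




lemma Xdvd_iff: "(fps_X ^ m dvd (f::'b::comm_ring_1 fps)) \<longleftrightarrow> (\<forall>k<m. fps_nth f k = 0)"
proof
  assume "fps_X ^ m dvd f"
  then obtain g where "f = fps_X ^ m * g" by (elim dvdE)
  then show "\<forall>k<m. fps_nth f k = 0" by (simp add: fps_X_power_mult_nth)
next
  assume H: "\<forall>k<m. fps_nth f k = 0"
  have "f = fps_X ^ m * Abs_fps (\<lambda>k. fps_nth f (k + m))"
    by (rule fps_ext) (use H in \<open>auto simp: fps_X_power_mult_nth\<close>)
  then show "fps_X ^ m dvd f" by (metis dvd_triv_left)
qed

lemma dvd_coeff:
  assumes "fps_X ^ m dvd (d::'b::comm_ring_1 fps)"
  shows "fps_nth (g * d) m = fps_nth g 0 * fps_nth d m"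
proof -
  obtain h where h: "d = fps_X ^ m * h" using assms by (elim dvdE)
  have gd: "g * d = fps_X ^ m * (g * h)" using h by (simp add: ac_simps)
  show ?thesis by (simp only: gd) (simp add: h fps_X_power_mult_nth)
qed

lemma pow_taylor:
  fixes y \<delta> :: "'b::comm_ring_1 fps"
  assumes m: "m \<ge> 1" and d: "fps_X ^ m dvd \<delta>"
  shows "fps_X ^ Suc m dvd ((y + \<delta>) ^ k - y ^ k - of_nat k * y ^ (k - 1) * \<delta>)"
proof (induction k)
  case 0 then show ?case by simp
next
  case (Suc k)
  define Q where "Q = (y + \<delta>) ^ k - y ^ k - of_nat k * y ^ (k - 1) * \<delta>"
  have yk: "of_nat k * (y * y ^ (k - 1)) = of_nat k * y ^ k"
    by (cases k) auto
  have eq: "(y + \<delta>) ^ Suc k - y ^ Suc k - of_nat (Suc k) * y ^ (Suc k - 1) * \<delta>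
      = (y + \<delta>) * Q + of_nat k * y ^ (k - 1) * (\<delta> * \<delta>)"
    unfolding Q_def using yk by (simp add: algebra_simps)
  have "fps_X ^ Suc m dvd fps_X ^ m * fps_X ^ m"
    unfolding power_add[symmetric] using m by (intro le_imp_power_dvd) simp
  also have "\<dots> dvd \<delta> * \<delta>" using d by (rule mult_dvd_mono) (rule d)
  finally have dd: "fps_X ^ Suc m dvd \<delta> * \<delta>" .
  have IH: "fps_X ^ Suc m dvd Q" using Suc.IH unfolding Q_def .
  show ?case unfolding eq by (rule dvd_add[OF dvd_mult[OF IH] dvd_mult[OF dd]])
qed

lemma prod_taylor:
  fixes a b c :: "'i \<Rightarrow> 'b::comm_ring_1 fps"
  assumes m: "m \<ge> 1" and "finite S"
    and r: "\<And>i. i \<in> S \<Longrightarrow> fps_X ^ Suc m dvd (a i - b i - c i)"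
    and cs: "\<And>i. i \<in> S \<Longrightarrow> fps_X ^ m dvd c i"
  shows "fps_X ^ Suc m dvd (prod a S - prod b S - (\<Sum>j\<in>S. c j * prod b (S - {j})))"
  using assms(2) r cs
proof (induction S rule: finite_induct)
  case empty then show ?case by simp
next
  case (insert s S)
  define A where "A = prod a S"
  define B where "B = prod b S"
  define C where "C = (\<Sum>j\<in>S. c j * prod b (S - {j}))"
  define R where "R = A - B - C"
  define r where "r = a s - b s - c s"
  have RD: "fps_X ^ Suc m dvd R" unfolding R_def A_def B_def C_def using insert by auto
  have rD: "fps_X ^ Suc m dvd r" unfolding r_def using insert by auto
  have CD: "fps_X ^ m dvd C" unfolding C_def using insert by (auto intro!: dvd_sum dvd_mult2)
  have csD: "fps_X ^ m dvd c s" using insert by auto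
  have XX: "fps_X ^ Suc m dvd fps_X ^ m * fps_X ^ m"
    unfolding power_add[symmetric] using m by (intro le_imp_power_dvd) simp
  have ccD: "fps_X ^ Suc m dvd c s * C"
    using XX mult_dvd_mono[OF csD CD] by (rule dvd_trans)
  have s1: "prod b (insert s S - {s}) = B" unfolding B_def using insert
    by (metis Diff_insert_absorb)
  have s2: "(\<Sum>j\<in>S. c j * prod b (insert s S - {j})) = b s * C"
  proof -
    have "(\<Sum>j\<in>S. c j * prod b (insert s S - {j})) = (\<Sum>j\<in>S. b s * (c j * prod b (S - {j})))"
    proof (rule sum.cong)
      fix j assume j: "j \<in> S"
      have "insert s S - {j} = insert s (S - {j})" using j insert by auto
      then show "c j * prod b (insert s S - {j}) = b s * (c j * prod b (S - {j}))"
        using insert by (simp add: ac_simps)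
    qed simp
    also have "\<dots> = b s * C" unfolding C_def by (simp add: sum_distrib_left)
    finally show ?thesis .
  qed
  have eq: "prod a (insert s S) - prod b (insert s S)
        - (\<Sum>j\<in>insert s S. c j * prod b (insert s S - {j}))
      = b s * R + c s * C + c s * R + r * (B + C + R)"
  proof -
    have "(\<Sum>j\<in>insert s S. c j * prod b (insert s S - {j})) = c s * B + b s * C"
      using insert(1,2) s1 s2 by (subst sum.insert) auto
    moreover have "prod a (insert s S) = a s * A" "prod b (insert s S) = b s * B"
      using insert(1,2) by (simp_all add: A_def B_def)
    ultimately show ?thesis by (simp add: R_def r_def algebra_simps)
  qed
  show ?case unfolding eq
    by (rule dvd_add[OF dvd_add[OF dvd_add[OF dvd_mult[OF RD] ccD] dvd_mult[OF RD]] dvd_mult2[OF rD]])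
qed




definition mmon :: "('n::finite \<Rightarrow> 'b::comm_semiring_1) \<Rightarrow> ('n \<Rightarrow>\<^sub>0 nat) \<Rightarrow> 'b" where
  "mmon x \<mu> = (\<Prod>i\<in>UNIV. x i ^ Poly_Mapping.lookup \<mu> i)"

lemma eval_superset:
  assumes "finite S" "Poly_Mapping.keys p \<subseteq> S" "\<phi> 0 = 0"
  shows "mp_eval \<phi> x p = (\<Sum>\<mu>\<in>S. \<phi> (Poly_Mapping.lookup p \<mu>) * mmon x \<mu>)"
  unfolding mp_eval_def mmon_def
  by (rule sum.mono_neutral_left) (use assms in \<open>auto simp: in_keys_iff\<close>)

lemma eval_add:
  assumes "\<phi> 0 = 0" "\<And>a b. \<phi> (a + b) = \<phi> a + \<phi> b"
  shows "mp_eval \<phi> x (p + q) = mp_eval \<phi> x p + mp_eval \<phi> x q"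
proof -
  let ?S = "Poly_Mapping.keys p \<union> Poly_Mapping.keys q"
  have "mp_eval \<phi> x (p + q) = (\<Sum>\<mu>\<in>?S. \<phi> (Poly_Mapping.lookup (p+q) \<mu>) * mmon x \<mu>)"
    by (rule eval_superset) (use assms keys_add[of p q] in auto)
  also have "\<dots> = (\<Sum>\<mu>\<in>?S. \<phi> (Poly_Mapping.lookup p \<mu>) * mmon x \<mu>)
        + (\<Sum>\<mu>\<in>?S. \<phi> (Poly_Mapping.lookup q \<mu>) * mmon x \<mu>)"
    by (simp add: lookup_add assms(2) distrib_right sum.distrib)
  also have "\<dots> = mp_eval \<phi> x p + mp_eval \<phi> x q"
    by (subst (1 2) eval_superset[where S = ?S]) (use assms in auto)
  finally show ?thesis .
qed

lemma eval_zero: "mp_eval \<phi> x 0 = 0"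
  by (simp add: mp_eval_def)

lemma eval_sum:
  assumes "\<phi> 0 = 0" "\<And>a b. \<phi> (a + b) = \<phi> a + \<phi> b" "finite A"
  shows "mp_eval \<phi> x (\<Sum>a\<in>A. f a) = (\<Sum>a\<in>A. mp_eval \<phi> x (f a))"
  using assms(3) by (induction A rule: finite_induct) (simp_all add: eval_zero eval_add assms)

lemma eval_single:
  assumes "\<phi> 0 = 0"
  shows "mp_eval \<phi> x (Poly_Mapping.single \<nu> c) = \<phi> c * mmon x \<nu>"
  by (subst eval_superset[where S = "{\<nu>}"]) (use assms in auto)

abbreviation Phi :: "'a::comm_ring_1 \<Rightarrow> ('n, 'a) mpoly fps" where
  "Phi c \<equiv> fps_const (mp_const c)"

lemma Phi0: "Phi 0 = 0" by (simp add: mp_const_def)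
lemma Phi_add: "Phi (a + b) = Phi a + Phi b" by (simp add: mp_const_def single_add)
lemma Phi_of_nat: "(Phi (of_nat k * c) :: ('n,'a::comm_ring_1) mpoly fps) = of_nat k * Phi c"
proof -
  have "mp_const (of_nat k * c) = (of_nat k :: ('n,'a) mpoly) * mp_const c"
    unfolding mp_const_def single_of_nat[symmetric] mult_single by simp
  then show ?thesis by (metis fps_const_mult fps_of_nat)
qed

lemma evalf: "mp_eval_fps x p = (\<Sum>\<mu>\<in>Poly_Mapping.keys p. Phi (Poly_Mapping.lookup p \<mu>) * mmon x \<mu>)"
  by (simp add: mp_eval_fps_def mp_eval_def mmon_def)

lemma evalf_pderiv:
  "mp_eval_fps x (mp_pderiv j p) = (\<Sum>\<mu>\<in>Poly_Mapping.keys p.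
     of_nat (Poly_Mapping.lookup \<mu> j) * Phi (Poly_Mapping.lookup p \<mu>)
        * mmon x (\<mu> - Poly_Mapping.single j 1))"
  unfolding mp_eval_fps_def mp_pderiv_def
  by (simp add: eval_sum Phi0 Phi_add eval_single Phi_of_nat)




lemma mono_taylor:
  fixes x d :: "'n::finite \<Rightarrow> 'b::comm_ring_1 fps"
  assumes m: "m \<ge> 1" and d: "\<And>j. fps_X ^ m dvd d j"
  shows "fps_X ^ Suc m dvd (mmon (\<lambda>i. x i + d i) \<mu> - mmon x \<mu>
     - (\<Sum>j\<in>UNIV. of_nat (Poly_Mapping.lookup \<mu> j) * mmon x (\<mu> - Poly_Mapping.single j 1) * d j))"
proof -
  define a where "a i = (x i + d i) ^ Poly_Mapping.lookup \<mu> i" for i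
  define b where "b i = x i ^ Poly_Mapping.lookup \<mu> i" for i
  define c where "c i = of_nat (Poly_Mapping.lookup \<mu> i) * x i ^ (Poly_Mapping.lookup \<mu> i - 1) * d i" for i
  have "fps_X ^ Suc m dvd (prod a UNIV - prod b UNIV - (\<Sum>j\<in>UNIV. c j * prod b (UNIV - {j})))"
  proof (rule prod_taylor[OF m])
    fix i
    show "fps_X ^ Suc m dvd (a i - b i - c i)"
      unfolding a_def b_def c_def by (rule pow_taylor[OF m d])
    show "fps_X ^ m dvd c i" unfolding c_def by (rule dvd_mult[OF d])
  qed simp
  moreover have "(\<Sum>j\<in>UNIV. c j * prod b (UNIV - {j}))
     = (\<Sum>j\<in>UNIV. of_nat (Poly_Mapping.lookup \<mu> j) * mmon x (\<mu> - Poly_Mapping.single j 1) * d j)"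
  proof (rule sum.cong)
    fix j :: 'n
    show "c j * prod b (UNIV - {j}) = of_nat (Poly_Mapping.lookup \<mu> j) * mmon x (\<mu> - Poly_Mapping.single j 1) * d j"
    proof (cases "Poly_Mapping.lookup \<mu> j = 0")
      case True then show ?thesis by (simp add: c_def)
    next
      case False
      have "mmon x (\<mu> - Poly_Mapping.single j 1)
          = x j ^ (Poly_Mapping.lookup \<mu> j - 1) * prod b (UNIV - {j})"
        unfolding mmon_def b_def
        by (subst prod.remove[of UNIV j]) (auto simp: lookup_minus lookup_single when_def intro!: prod.cong)
      then show ?thesis by (simp add: c_def ac_simps)
    qed
  qed simp
  moreover have "prod a UNIV = mmon (\<lambda>i. x i + d i) \<mu>" "prod b UNIV = mmon x \<mu>"
    by (simp_all add: a_def b_def mmon_def)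
  ultimately show ?thesis by simp
qed

lemma taylorK:
  fixes x d :: "'n::finite \<Rightarrow> ('n, 'a::comm_ring_1) mpoly fps"
  assumes m: "m \<ge> 1" and d: "\<And>j. fps_X ^ m dvd d j"
  shows "fps_X ^ Suc m dvd (mp_eval_fps (\<lambda>i. x i + d i) p - mp_eval_fps x p
     - (\<Sum>j\<in>UNIV. mp_eval_fps x (mp_pderiv j p) * d j))"
proof -
  let ?K = "Poly_Mapping.keys p"
  let ?T = "\<lambda>\<mu>. mmon (\<lambda>i. x i + d i) \<mu> - mmon x \<mu>
     - (\<Sum>j\<in>UNIV. of_nat (Poly_Mapping.lookup \<mu> j) * mmon x (\<mu> - Poly_Mapping.single j 1) * d j)"
  have "(\<Sum>j\<in>UNIV. mp_eval_fps x (mp_pderiv j p) * d j)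
      = (\<Sum>j\<in>UNIV. \<Sum>\<mu>\<in>?K. Phi (Poly_Mapping.lookup p \<mu>) *
           (of_nat (Poly_Mapping.lookup \<mu> j) * mmon x (\<mu> - Poly_Mapping.single j 1) * d j))"
    unfolding evalf_pderiv sum_distrib_right by (simp add: ac_simps)
  also have "\<dots> = (\<Sum>\<mu>\<in>?K. Phi (Poly_Mapping.lookup p \<mu>) *
      (\<Sum>j\<in>UNIV. of_nat (Poly_Mapping.lookup \<mu> j) * mmon x (\<mu> - Poly_Mapping.single j 1) * d j))"
    by (subst sum.swap) (simp add: sum_distrib_left)
  finally have eq: "mp_eval_fps (\<lambda>i. x i + d i) p - mp_eval_fps x p
     - (\<Sum>j\<in>UNIV. mp_eval_fps x (mp_pderiv j p) * d j)
     = (\<Sum>\<mu>\<in>?K. Phi (Poly_Mapping.lookup p \<mu>) * ?T \<mu>)"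
    unfolding evalf by (simp add: right_diff_distrib sum_subtractf)
  show ?thesis unfolding eq
    by (intro dvd_sum dvd_mult mono_taylor[OF m d])
qed

lemma nth0_power: "fps_nth (f ^ k) 0 = fps_nth f 0 ^ k"
  by (induction k) auto

lemma nth0_prod: "fps_nth (prod f S) 0 = prod (\<lambda>i. fps_nth (f i) 0) S"
  by (induction S rule: infinite_finite_induct) auto

lemma varpow: "(mp_var i :: ('n,'a::comm_semiring_1) mpoly) ^ k = Poly_Mapping.single (Poly_Mapping.single i k) 1"
  by (induction k) (simp_all add: mp_var_def mult_single flip: single_add)

lemma prodvar: "finite S \<Longrightarrow> (\<Prod>i\<in>S. Poly_Mapping.single (Poly_Mapping.single i (f i)) (1::'a::comm_semiring_1))
   = Poly_Mapping.single (\<Sum>i\<in>S. Poly_Mapping.single i (f i)) 1"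
  by (induction S rule: finite_induct) (simp_all add: mult_single)

lemma sum_single_lookup: "(\<Sum>i\<in>UNIV. Poly_Mapping.single i (Poly_Mapping.lookup \<mu> i)) = (\<mu> :: 'n::finite \<Rightarrow>\<^sub>0 nat)"
  by (rule poly_mapping_eqI) (simp add: lookup_sum lookup_single when_def)

lemma sum_single_keys: "(\<Sum>\<mu>\<in>Poly_Mapping.keys p. Poly_Mapping.single \<mu> (Poly_Mapping.lookup p \<mu>)) = p"
proof (rule poly_mapping_eqI)
  fix k
  show "Poly_Mapping.lookup (\<Sum>\<mu>\<in>Poly_Mapping.keys p. Poly_Mapping.single \<mu> (Poly_Mapping.lookup p \<mu>)) k
      = Poly_Mapping.lookup p k"
    by (cases "k \<in> Poly_Mapping.keys p") (auto simp: lookup_sum lookup_single when_def in_keys_iff)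
qed

lemma C0:
  fixes x :: "'n::finite \<Rightarrow> ('n, 'a::comm_ring_1) mpoly fps"
  assumes "\<And>i. fps_nth (x i) 0 = mp_var i"
  shows "fps_nth (mp_eval_fps x p) 0 = p"
proof -
  have "fps_nth (mp_eval_fps x p) 0
     = (\<Sum>\<mu>\<in>Poly_Mapping.keys p. mp_const (Poly_Mapping.lookup p \<mu>) * (\<Prod>i\<in>UNIV. mp_var i ^ Poly_Mapping.lookup \<mu> i))"
    unfolding evalf fps_sum_nth by (simp add: mmon_def nth0_prod nth0_power assms)
  also have "\<dots> = (\<Sum>\<mu>\<in>Poly_Mapping.keys p. Poly_Mapping.single \<mu> (Poly_Mapping.lookup p \<mu>))"
    by (rule sum.cong) (simp_all add: varpow prodvar sum_single_lookup mp_const_def mult_single)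
  finally show ?thesis by (simp add: sum_single_keys)
qed




lemma pow_cong: "(q::'b::comm_ring_1) dvd (a - b) \<Longrightarrow> q dvd (a ^ k - b ^ k)"
proof (induction k)
  case (Suc k)
  have "a ^ Suc k - b ^ Suc k = a * (a ^ k - b ^ k) + (a - b) * b ^ k" by (simp add: algebra_simps)
  then show ?case using Suc by (simp add: dvd_add dvd_mult dvd_mult2)
qed simp

lemma prod_cong_dvd: "finite S \<Longrightarrow> (\<And>i. i \<in> S \<Longrightarrow> (q::'b::comm_ring_1) dvd (f i - g i))
  \<Longrightarrow> q dvd (prod f S - prod g S)"
proof (induction S rule: finite_induct)
  case (insert s S)
  have "prod f (insert s S) - prod g (insert s S) = f s * (prod f S - prod g S) + (f s - g s) * prod g S"
    using insert(1,2) by (simp add: algebra_simps)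
  then show ?case using insert by (simp add: dvd_add dvd_mult dvd_mult2)
qed simp

lemma eval_cong:
  fixes x y :: "'n::finite \<Rightarrow> ('n, 'a::comm_ring_1) mpoly fps"
  assumes "\<And>i. q dvd (x i - y i)"
  shows "q dvd (mp_eval_fps x p - mp_eval_fps y p)"
proof -
  have "mp_eval_fps x p - mp_eval_fps y p
    = (\<Sum>\<mu>\<in>Poly_Mapping.keys p. Phi (Poly_Mapping.lookup p \<mu>) * (mmon x \<mu> - mmon y \<mu>))"
    unfolding evalf by (simp add: right_diff_distrib sum_subtractf)
  also have "q dvd \<dots>"
    unfolding mmon_def
    by (intro dvd_sum dvd_mult prod_cong_dvd pow_cong assms) auto
  finally show ?thesis .
qed




theorem theorem4p1:
  fixes F :: "'n::finite \<Rightarrow> ('n, 'a::field_char_0) mpoly"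
  assumes "CARD('n) \<ge> 2"
    and "\<exists>c. c \<noteq> 0 \<and> jacobian_det F = mp_const c"
  shows "\<exists>!U :: 'n \<Rightarrow> ('n, 'a) mpoly fps.
           (\<forall>i. mp_eval_fps U (F i)
                  = fps_X * fps_const (mp_var i) + (1 - fps_X) * fps_const (F i))
         \<and> (\<forall>i. fps_nth (U i) 0 = mp_var i)"
proof -
  obtain c where c: "c \<noteq> 0" "jacobian_det F = mp_const c" using assms(2) by blast
  define J :: "('n,'a) mpoly^'n^'n" where "J = (\<chi> i j. mp_pderiv j (F i))"
  have dJ: "det J = mp_const c" using c(2) by (simp add: J_def jacobian_det_def)
  have "det J * mp_const (1/c) = 1" using c(1) by (simp add: dJ mp_const_def mult_single)
  then obtain Ji where Ji: "J ** Ji = mat 1" "Ji ** J = mat 1" using mat_inv by blast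
  define rhs where "rhs i = fps_X * fps_const (mp_var i) + (1 - fps_X) * fps_const (F i)" for i
  have rhs0: "fps_nth (rhs i) 0 = F i" for i by (simp add: rhs_def)
  have lin: "fps_nth (\<Sum>j\<in>UNIV. mp_eval_fps U (mp_pderiv j (F i)) * d j) (Suc n)
      = (J *v (\<chi> j. fps_nth (d j) (Suc n))) $ i"
    if U0: "\<And>i. fps_nth (U i) 0 = mp_var i" and dd: "\<And>j. fps_X ^ Suc n dvd d j"
    for U d i n
    unfolding fps_sum_nth dvd_coeff[OF dd] C0[OF U0]
    by (simp add: matrix_vector_mult_def J_def)
  have Jinj: "v = 0" if "J *v v = 0" for v
  proof -
    have "v = (Ji ** J) *v v" using Ji by simp
    also have "\<dots> = Ji *v (J *v v)" by (simp add: matrix_vector_mul_assoc)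
    finally show ?thesis using that by simp
  qed
  have uniq: "W = U" if
    U: "\<forall>i. mp_eval_fps U (F i) = rhs i" "\<forall>i. fps_nth (U i) 0 = mp_var i" and
    W: "\<forall>i. mp_eval_fps W (F i) = rhs i" "\<forall>i. fps_nth (W i) 0 = mp_var i" for U W
  proof -
    have all: "\<forall>i. fps_X ^ Suc n dvd (W i - U i)" for n
    proof (induction n)
      case 0
      show ?case
      proof
        fix i
        show "fps_X ^ Suc 0 dvd (W i - U i)" unfolding Xdvd_iff using U W by simp
      qed
    next
      case (Suc n)
      define d where "d j = W j - U j" for j
      have dd: "fps_X ^ Suc n dvd d j" for j using Suc d_def by auto
      have WU: "W = (\<lambda>i. U i + d i)" by (simp add: d_def)
      define v where "v = (\<chi> j. fps_nth (d j) (Suc n))"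
      have "(J *v v) $ i = 0" for i
      proof -
        have "fps_X ^ Suc (Suc n) dvd (mp_eval_fps W (F i) - mp_eval_fps U (F i)
           - (\<Sum>j\<in>UNIV. mp_eval_fps U (mp_pderiv j (F i)) * d j))"
          unfolding WU by (rule taylorK) (use dd in auto)
        then have "fps_X ^ Suc (Suc n) dvd (\<Sum>j\<in>UNIV. mp_eval_fps U (mp_pderiv j (F i)) * d j)"
          using U W by (simp add: dvd_minus_iff)
        then have "fps_nth (\<Sum>j\<in>UNIV. mp_eval_fps U (mp_pderiv j (F i)) * d j) (Suc n) = 0"
          by (simp add: Xdvd_iff del: power_Suc)
        then show ?thesis unfolding v_def using lin[where U=U and d=d and n=n and i=i] U dd by simp
      qed
      then have "J *v v = 0" by (simp add: vec_eq_iff)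
      then have v0: "v = 0" by (rule Jinj)
      show ?case
      proof
        fix i
        have "\<forall>k<Suc n. fps_nth (d i) k = 0" using dd[of i] by (simp add: Xdvd_iff del: power_Suc)
        moreover have "fps_nth (d i) (Suc n) = 0" using v0 unfolding v_def by (simp add: vec_eq_iff)
        ultimately have "\<forall>k<Suc (Suc n). fps_nth (d i) k = 0" using less_Suc_eq by auto
        then show "fps_X ^ Suc (Suc n) dvd (W i - U i)" by (simp add: Xdvd_iff d_def del: power_Suc)
      qed
    qed
    show "W = U"
    proof
      fix i
      show "W i = U i"
      proof (rule fps_ext)
        fix k
        have "fps_nth (W i - U i) k = 0" using all[of k] by (simp add: Xdvd_iff del: power_Suc)
        then show "fps_nth (W i) k = fps_nth (U i) k" by simp
      qed
    qed
  qed
  define stp where "stp n Vn i = Vn i + fps_X ^ Suc n * fps_const ((Ji *v (\<chi> j. fps_nth (rhs j - mp_eval_fps Vn (F j)) (Suc n))) $ i)"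
    for n and Vn :: "'n \<Rightarrow> ('n,'a) mpoly fps" and i
  define V where "V = rec_nat (\<lambda>i. fps_const (mp_var i)) stp"
  have V0: "V 0 = (\<lambda>i. fps_const (mp_var i))" by (simp add: V_def)
  have VS: "V (Suc n) = stp n (V n)" for n by (simp add: V_def)
  have inv: "(\<forall>i. fps_nth (V n i) 0 = mp_var i) \<and> (\<forall>i. fps_X ^ Suc n dvd (mp_eval_fps (V n) (F i) - rhs i))" for n
  proof (induction n)
    case 0
    have "fps_nth (V 0 i) 0 = mp_var i" for i by (simp add: V0)
    moreover have "fps_X ^ Suc 0 dvd (mp_eval_fps (V 0) (F i) - rhs i)" for i
      unfolding Xdvd_iff using C0[of "V 0", OF calculation] by (simp add: rhs0)
    ultimately show ?case by blast
  next
    case (Suc n)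
    define rr where "rr = (\<chi> j. fps_nth (rhs j - mp_eval_fps (V n) (F j)) (Suc n))"
    define e where "e = Ji *v rr"
    define d where "d i = fps_X ^ Suc n * fps_const (e $ i)" for i
    have VSn: "V (Suc n) = (\<lambda>i. V n i + d i)" unfolding VS by (rule ext) (simp add: stp_def d_def e_def rr_def)
    have dd: "fps_X ^ Suc n dvd d j" for j by (simp add: d_def)
    have V0n: "fps_nth (V n i) 0 = mp_var i" for i using Suc by blast
    have A: "fps_nth (V (Suc n) i) 0 = mp_var i" for i by (simp add: VSn d_def V0n)
    have B: "fps_X ^ Suc (Suc n) dvd (mp_eval_fps (V (Suc n)) (F i) - rhs i)" for i
    proof -
      define S where "S = (\<Sum>j\<in>UNIV. mp_eval_fps (V n) (mp_pderiv j (F i)) * d j)"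
      define T where "T = mp_eval_fps (V (Suc n)) (F i) - mp_eval_fps (V n) (F i) - S"
      have TD: "fps_X ^ Suc (Suc n) dvd T" unfolding T_def S_def VSn
        by (rule taylorK) (use dd in auto)
      have SD: "fps_X ^ Suc n dvd S" unfolding S_def by (intro dvd_sum dvd_mult dd)
      have ID: "fps_X ^ Suc n dvd (mp_eval_fps (V n) (F i) - rhs i)" using Suc by blast
      have Sn: "fps_nth S (Suc n) = rr $ i"
      proof -
        have "(\<chi> j. fps_nth (d j) (Suc n)) = e" by (simp add: d_def vec_eq_iff)
        then have "fps_nth S (Suc n) = (J *v e) $ i" unfolding S_def using lin[OF V0n dd] by simp
        also have "J *v e = rr" unfolding e_def by (simp add: matrix_vector_mul_assoc Ji)
        finally show ?thesis .
      qed
      have eq: "mp_eval_fps (V (Suc n)) (F i) - rhs i = T + (mp_eval_fps (V n) (F i) - rhs i) + S"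
        by (simp add: T_def)
      show ?thesis unfolding eq Xdvd_iff
      proof (intro allI impI)
        fix k assume k: "k < Suc (Suc n)"
        have t0: "fps_nth T k = 0" using TD k by (simp add: Xdvd_iff del: power_Suc)
        show "fps_nth (T + (mp_eval_fps (V n) (F i) - rhs i) + S) k = 0"
        proof (cases "k = Suc n")
          case True
          then show ?thesis using t0 Sn by (simp add: rr_def)
        next
          case False
          then have "k < Suc n" using k by simp
          then show ?thesis using t0 SD ID by (simp add: Xdvd_iff del: power_Suc)
        qed
      qed
    qed
    show ?case using A B by blast
  qed
  have stab: "\<forall>k\<le>n. fps_nth (V n i) k = fps_nth (V k i) k" for n i
  proof (induction n)
    case (Suc n)
    show ?case
    proof (intro allI impI)
      fix k assume k: "k \<le> Suc n"
      show "fps_nth (V (Suc n) i) k = fps_nth (V k i) k"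
      proof (cases "k = Suc n")
        case False
        then have "k \<le> n" using k by simp
        moreover have "fps_nth (V (Suc n) i) k = fps_nth (V n i) k"
          using \<open>k \<le> n\<close> by (simp add: VS stp_def fps_X_power_mult_nth) arith
        ultimately show ?thesis using Suc by simp
      qed simp
    qed
  qed simp
  define U where "U i = Abs_fps (\<lambda>k. fps_nth (V k i) k)" for i
  have UV: "fps_X ^ Suc n dvd (U i - V n i)" for n i
    unfolding Xdvd_iff
  proof (intro allI impI)
    fix k assume "k < Suc n"
    then have "fps_nth (V n i) k = fps_nth (V k i) k" using stab[of n i] by simp
    then show "fps_nth (U i - V n i) k = 0" by (simp add: U_def)
  qed
  have U1: "mp_eval_fps U (F i) = rhs i" for i
  proof (rule fps_ext)
    fix k
    have "fps_X ^ Suc k dvd (mp_eval_fps U (F i) - mp_eval_fps (V k) (F i))"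
      by (rule eval_cong) (rule UV)
    moreover have "fps_X ^ Suc k dvd (mp_eval_fps (V k) (F i) - rhs i)" using inv by blast
    ultimately have "fps_X ^ Suc k dvd (mp_eval_fps U (F i) - rhs i)"
      by (metis (no_types) diff_add_cancel add_diff_eq dvd_add)
    then show "fps_nth (mp_eval_fps U (F i)) k = fps_nth (rhs i) k" by (simp add: Xdvd_iff del: power_Suc)
  qed
  have U2: "fps_nth (U i) 0 = mp_var i" for i
  proof -
    have "fps_nth (U i) 0 = fps_nth (V 0 i) 0" by (simp add: U_def)
    then show ?thesis using inv[of 0] by simp
  qed
  show ?thesis
    unfolding rhs_def[symmetric]
    by (rule ex1I[of _ U]) (use U1 U2 uniq in auto)
qed


end
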